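(* Let $p$ be a prime. If $\{a^1,\ldots,a^n\}\subseteq \mathbb{Z}^m$ is a $p$-adic generating set for a cone, then it is a $p$-adic generating set for a subspace.
   Context: A $p$-adic rational is a number $a/p^k$ with $a,k\in\mathbb{Z}$, $k\ge0$. A finite set $S\subseteq\mathbb{Z}^m$ is a $p$-adic generating set for a cone if every integral vector in the conic hull of $S$ is a conic combination of the elements of $S$ with $p$-adic coefficients; it is a $p$-adic generating set for a subspace if every integral vector in the linear hull of $S$ is a linear combination of the elements of $S$ with $p$-adic coefficients. *)

theory Defs
  imports Main "HOL-Computational_Algebra.Primes" Complex_Main
begin

text \<open>Vectors in Z^m are modelled as functions nat => int that vanish outside {0..<m}.
  A finite family a^1..a^n is modelled as a : nat => (nat => int), indexed by i < n.\<close>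

definition padic_rational :: "nat \<Rightarrow> real \<Rightarrow> bool" where
  "padic_rational p q \<longleftrightarrow> (\<exists>(a::int) (k::nat). q = of_int a / (real p) ^ k)"

definition int_vec :: "nat \<Rightarrow> (nat \<Rightarrow> int) \<Rightarrow> bool" where
  "int_vec m x \<longleftrightarrow> (\<forall>j\<ge>m. x j = 0)"

definition is_comb :: "nat \<Rightarrow> (nat \<Rightarrow> nat \<Rightarrow> int) \<Rightarrow> (nat \<Rightarrow> real) \<Rightarrow> (nat \<Rightarrow> int) \<Rightarrow> bool" where
  "is_comb n a c x \<longleftrightarrow> (\<forall>j. real_of_int (x j) = (\<Sum>i<n. c i * real_of_int (a i j)))"

definition in_cone :: "nat \<Rightarrow> (nat \<Rightarrow> nat \<Rightarrow> int) \<Rightarrow> (nat \<Rightarrow> int) \<Rightarrow> bool" where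
  "in_cone n a x \<longleftrightarrow> (\<exists>c. (\<forall>i<n. c i \<ge> 0) \<and> is_comb n a c x)"

definition in_span :: "nat \<Rightarrow> (nat \<Rightarrow> nat \<Rightarrow> int) \<Rightarrow> (nat \<Rightarrow> int) \<Rightarrow> bool" where
  "in_span n a x \<longleftrightarrow> (\<exists>c. is_comb n a c x)"

definition padic_gen_cone :: "nat \<Rightarrow> nat \<Rightarrow> nat \<Rightarrow> (nat \<Rightarrow> nat \<Rightarrow> int) \<Rightarrow> bool" where
  "padic_gen_cone p m n a \<longleftrightarrow>
     (\<forall>x. int_vec m x \<and> in_cone n a x \<longrightarrow>
        (\<exists>c. (\<forall>i<n. c i \<ge> 0 \<and> padic_rational p (c i)) \<and> is_comb n a c x))"

definition padic_gen_subspace :: "nat \<Rightarrow> nat \<Rightarrow> nat \<Rightarrow> (nat \<Rightarrow> nat \<Rightarrow> int) \<Rightarrow> bool" where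
  "padic_gen_subspace p m n a \<longleftrightarrow>
     (\<forall>x. int_vec m x \<and> in_span n a x \<longrightarrow>
        (\<exists>c. (\<forall>i<n. padic_rational p (c i)) \<and> is_comb n a c x))"

end

theory Submission
  imports Defs
begin

lemma padic_minus_int:
  assumes "p > 0" "padic_rational p d"
  shows "padic_rational p (d - of_int K)"
proof -
  obtain a' k where d: "d = of_int a' / (real p) ^ k"
    using assms(2) unfolding padic_rational_def by blast
  have pk: "(real p) ^ k \<noteq> 0" using assms(1) by simp
  have "d - of_int K = of_int (a' - K * int p ^ k) / (real p) ^ k"
    using pk by (simp add: d field_simps)
  then show ?thesis unfolding padic_rational_def by blast
qed

theorem proposition3p3:
  fixes p m n :: nat and a :: "nat \<Rightarrow> nat \<Rightarrow> int"
  assumes "prime p"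
    and "\<forall>i<n. int_vec m (a i)"
    and "padic_gen_cone p m n a"
  shows "padic_gen_subspace p m n a"
  unfolding padic_gen_subspace_def
proof (intro allI impI)
  fix x assume hx: "int_vec m x \<and> in_span n a x"
  then obtain c where c: "is_comb n a c x" unfolding in_span_def by blast
  define K :: int where "K = \<lceil>\<Sum>i<n. \<bar>c i\<bar>\<rceil>"
  have cK: "c i + of_int K \<ge> 0" if "i < n" for i
  proof -
    have "\<bar>c i\<bar> \<le> (\<Sum>i<n. \<bar>c i\<bar>)"
      using that by (intro member_le_sum) auto
    also have "\<dots> \<le> of_int K" unfolding K_def by linarith
    finally show ?thesis by linarith
  qed
  define z where "z j = x j + K * (\<Sum>i<n. a i j)" for j
  have zc: "is_comb n a (\<lambda>i. c i + of_int K) z"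
    using c unfolding is_comb_def z_def
    by (simp add: algebra_simps sum.distrib sum_distrib_left)
  have zv: "int_vec m z"
    using hx assms(2) unfolding int_vec_def z_def by simp
  have "in_cone n a z" unfolding in_cone_def
    by (rule exI[of _ "\<lambda>i. c i + of_int K"]) (use cK zc in simp)
  then have "\<exists>d. (\<forall>i<n. d i \<ge> 0 \<and> padic_rational p (d i)) \<and> is_comb n a d z"
    using assms(3) zv unfolding padic_gen_cone_def by simp
  then obtain d where d: "\<forall>i<n. d i \<ge> 0 \<and> padic_rational p (d i)" "is_comb n a d z"
    by (elim exE conjE)
  have p0: "p > 0" using assms(1) prime_gt_0_nat by blast
  have "is_comb n a (\<lambda>i. d i - of_int K) x"
    using d(2) unfolding is_comb_def z_def
    by (simp add: algebra_simps sum_subtractf sum_distrib_left)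
  moreover have "\<forall>i<n. padic_rational p (d i - of_int K)"
    using d(1) padic_minus_int[OF p0] by simp
  ultimately show "\<exists>c. (\<forall>i<n. padic_rational p (c i)) \<and> is_comb n a c x" by (intro exI conjI)
qed

end
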